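(* If $G$ is a forest without isolated vertices, then $str(G)=|V(G)|+1$.
   Context: For a graph $G$ of order $p$, a numbering of $G$ is a bijection $f:V(G)\to[1,p]$. The strength of a numbering $f$ is $str_f(G)=\max\{f(u)+f(v): uv\in E(G)\}$, and the strength of a graph $G$ with at least one edge is $str(G)=\min\{str_f(G): f \text{ a numbering of } G\}$. *)

theory Defs
  imports Main
begin

definition simple_graph :: "'a set \<Rightarrow> 'a set set \<Rightarrow> bool" where
  "simple_graph V E \<longleftrightarrow> finite V \<and> (\<forall>e\<in>E. e \<subseteq> V \<and> card e = 2)"

definition is_cycle :: "'a set \<Rightarrow> 'a set set \<Rightarrow> 'a list \<Rightarrow> bool" where
  "is_cycle V E cs \<longleftrightarrow> length cs \<ge> 3 \<and> distinct cs \<and> set cs \<subseteq> V \<and>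
     (\<forall>i < length cs. {cs ! i, cs ! ((i + 1) mod length cs)} \<in> E)"

definition forest :: "'a set \<Rightarrow> 'a set set \<Rightarrow> bool" where
  "forest V E \<longleftrightarrow> simple_graph V E \<and> \<not> (\<exists>cs. is_cycle V E cs)"

definition isolated_vertex :: "'a set \<Rightarrow> 'a set set \<Rightarrow> 'a \<Rightarrow> bool" where
  "isolated_vertex V E v \<longleftrightarrow> v \<in> V \<and> (\<forall>e\<in>E. v \<notin> e)"

definition numbering :: "'a set \<Rightarrow> ('a \<Rightarrow> nat) \<Rightarrow> bool" where
  "numbering V f \<longleftrightarrow> bij_betw f V {1..card V}"

definition strength_of :: "'a set set \<Rightarrow> ('a \<Rightarrow> nat) \<Rightarrow> nat" where
  "strength_of E f = Max {f u + f v | u v. {u, v} \<in> E}"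

definition strength :: "'a set \<Rightarrow> 'a set set \<Rightarrow> nat" where
  "strength V E = Min {strength_of E f | f. numbering V f}"

end

theory Submission imports Defs begin

definition gpath :: "'a set \<Rightarrow> 'a set set \<Rightarrow> 'a list \<Rightarrow> bool" where
  "gpath V E xs \<longleftrightarrow> xs \<noteq> [] \<and> distinct xs \<and> set xs \<subseteq> V \<and>
     (\<forall>i. Suc i < length xs \<longrightarrow> {xs!i, xs!Suc i} \<in> E)"

lemma edge_form:
  assumes "simple_graph V E" "e \<in> E" "x \<in> e"
  shows "\<exists>y. y \<noteq> x \<and> y \<in> V \<and> e = {x, y}"
proof -
  have "card e = 2" "e \<subseteq> V" using assms unfolding simple_graph_def by auto
  then obtain a b where "a \<noteq> b" "e = {a,b}" by (meson card_2_iff)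
  then show ?thesis using assms(3) \<open>e \<subseteq> V\<close> by auto
qed

lemma leaf_exists:
  assumes F: "forest V E" and ne: "V \<noteq> {}"
  shows "\<exists>v\<in>V. (\<forall>e\<in>E. v \<notin> e) \<or> (\<exists>u. {v,u} \<in> E \<and> (\<forall>e\<in>E. v \<in> e \<longrightarrow> e = {v,u}))"
proof -
  have SG: "simple_graph V E" and NC: "\<And>cs. \<not> is_cycle V E cs" using F unfolding forest_def by auto
  have fin: "finite V" using SG unfolding simple_graph_def by auto
  obtain w where "w \<in> V" using ne by auto
  then have p0: "gpath V E [w]" unfolding gpath_def by auto
  have bnd: "\<forall>ys. gpath V E ys \<longrightarrow> length ys < Suc (card V)"
  proof (intro allI impI)
    fix ys assume "gpath V E ys"
    then have "distinct ys" "set ys \<subseteq> V" unfolding gpath_def by auto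
    then have "length ys \<le> card V" using card_mono[OF fin] distinct_card by metis
    then show "length ys < Suc (card V)" by simp
  qed
  obtain xs where P: "gpath V E xs" and mx: "\<And>ys. gpath V E ys \<Longrightarrow> length ys \<le> length xs"
    using Lattices_Big.ex_has_greatest_nat[of "gpath V E" "[w]" length "Suc (card V)", OF p0 bnd] by blast
  have xne: "xs \<noteq> []" and xd: "distinct xs" and xV: "set xs \<subseteq> V"
    and xE: "\<And>i. Suc i < length xs \<Longrightarrow> {xs!i, xs!Suc i} \<in> E" using P unfolding gpath_def by auto
  define x0 where "x0 = xs!0"
  have x0V: "x0 \<in> V" using xne xV x0_def by auto
  have nin: "\<exists>j<length xs. y = xs!j \<and> j \<noteq> 0" if "{x0,y} \<in> E" for y
  proof -
    have "card {x0,y} = 2" using that SG unfolding simple_graph_def by blast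
    then have yx: "y \<noteq> x0" by (cases "y = x0") auto
    have yV: "y \<in> V" using that SG unfolding simple_graph_def by auto
    show ?thesis
    proof (rule ccontr)
      assume "\<not> ?thesis"
      then have ynot: "y \<notin> set xs" using yx x0_def by (metis in_set_conv_nth)
      have "gpath V E (y#xs)" unfolding gpath_def
      proof (intro conjI allI impI)
        show "distinct (y#xs)" using xd ynot by simp
        show "set (y#xs) \<subseteq> V" using xV yV by simp
        fix i assume "Suc i < length (y#xs)"
        then show "{(y#xs)!i, (y#xs)!Suc i} \<in> E"
          using that xE x0_def by (cases i) (auto simp: insert_commute)
      qed simp
      then show False using mx[of "y#xs"] by simp
    qed
  qed
  show ?thesis
  proof (cases "\<forall>e\<in>E. x0 \<notin> e")
    case True then show ?thesis using x0V by blast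
  next
    case False
    then obtain e where "e \<in> E" "x0 \<in> e" by blast
    then obtain u where u: "u \<noteq> x0" "e = {x0,u}" using edge_form[OF SG] by blast
    have uniq: "z = u" if zE: "{x0,z} \<in> E" for z
    proof (rule ccontr)
      assume zu: "z \<noteq> u"
      obtain j where j: "j < length xs" "u = xs!j" "j \<noteq> 0" using nin \<open>e \<in> E\<close> u by blast
      obtain k where k: "k < length xs" "z = xs!k" "k \<noteq> 0" using nin zE by blast
      have jk: "j \<noteq> k" using j k zu by auto
      define m where "m = max j k"
      have m: "m < length xs" "2 \<le> m" "{x0, xs!m} \<in> E" using j k jk \<open>e \<in> E\<close> u zE m_def by (auto simp: max_def)
      define cs where "cs = take (Suc m) xs"
      have lc: "length cs = Suc m" using m cs_def by simp
      have "is_cycle V E cs" unfolding is_cycle_def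
      proof (intro conjI allI impI)
        show "3 \<le> length cs" using lc m by simp
        show "distinct cs" using xd cs_def by simp
        show "set cs \<subseteq> V" using xV cs_def by (meson set_take_subset subset_trans)
        fix i assume i: "i < length cs"
        show "{cs ! i, cs ! ((i + 1) mod length cs)} \<in> E"
        proof (cases "i = m")
          case True
          then have "(i+1) mod length cs = 0" using lc by simp
          then show ?thesis using True m cs_def x0_def lc by (simp add: insert_commute)
        next
          case False
          then have "i < m" using i lc by simp
          then have "(i+1) mod length cs = Suc i" using lc by simp
          then show ?thesis using xE[of i] \<open>i < m\<close> m cs_def by simp
        qed
      qed
      then show False using NC by blast
    qed
    have "\<forall>e\<in>E. x0 \<in> e \<longrightarrow> e = {x0,u}"
    proof (intro ballI impI)
      fix e' assume "e' \<in> E" "x0 \<in> e'"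
      then obtain z where "z \<noteq> x0" "e' = {x0,z}" using edge_form[OF SG] by blast
      then show "e' = {x0,u}" using uniq \<open>e' \<in> E\<close> by simp
    qed
    then show ?thesis using x0V \<open>e \<in> E\<close> u by blast
  qed
qed


lemma sub_forest:
  assumes "forest V E" "V' \<subseteq> V" "E' \<subseteq> E" "\<forall>e\<in>E'. e \<subseteq> V'"
  shows "forest V' E'"
proof -
  have "finite V'" using assms(1,2) unfolding forest_def simple_graph_def using finite_subset by blast
  moreover have "\<forall>e\<in>E'. e \<subseteq> V' \<and> card e = 2" using assms unfolding forest_def simple_graph_def by blast
  moreover have "\<not> (\<exists>cs. is_cycle V' E' cs)" using assms unfolding forest_def is_cycle_def by blast
  ultimately show ?thesis unfolding forest_def simple_graph_def by blast
qed

lemma bij_from_image: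
  assumes "finite A" "card A = card B" "f ` A = B"
  shows "bij_betw f A B"
  using assms inj_on_iff_eq_card unfolding bij_betw_def by metis

lemma forest_num:
  "forest V E \<Longrightarrow> \<exists>f. bij_betw f V {1..card V} \<and> (\<forall>u v. {u,v}\<in>E \<longrightarrow> f u + f v \<le> card V + 1)"
proof (induction "card V" arbitrary: V E rule: less_induct)
  case less
  have SG: "simple_graph V E" using less.prems unfolding forest_def by auto
  have fin: "finite V" using SG unfolding simple_graph_def by auto
  have EV: "\<And>e. e \<in> E \<Longrightarrow> e \<subseteq> V" using SG unfolding simple_graph_def by auto
  show ?case
  proof (cases "V = {}")
    case True
    have "\<forall>e\<in>E. e = {} \<and> card e = 2" using SG True unfolding simple_graph_def by blast
    then have "E = {}" by auto
    then show ?thesis using True by (auto simp: bij_betw_def)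
  next
    case False
    obtain v where vV: "v \<in> V" and vcase: "(\<forall>e\<in>E. v \<notin> e) \<or> (\<exists>u. {v,u} \<in> E \<and> (\<forall>e\<in>E. v \<in> e \<longrightarrow> e = {v,u}))"
      using leaf_exists[OF less.prems False] by blast
    define p where "p = card V"
    show ?thesis
    proof (cases "\<forall>e\<in>E. v \<notin> e")
      case True
      define V' where "V' = V - {v}"
      have cV': "card V' = p - 1" using vV fin V'_def p_def by simp
      have p1: "p \<ge> 1" using vV fin p_def by (metis card_gt_0_iff Suc_leI One_nat_def empty_iff)
      have "forest V' E" using sub_forest[OF less.prems, of V' E] EV True V'_def by blast
      moreover have "card V' < card V" using vV fin V'_def by (metis card_Diff1_less)
      ultimately obtain g where g0: "bij_betw g V' {1..card V'}" "\<And>a b. {a,b}\<in>E \<Longrightarrow> g a + g b \<le> card V' + 1"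
        using less.hyps by blast
      have pp: "card V' + 1 = p" using cV' p1 by simp
      have g: "bij_betw g V' {1..p-1}" "\<And>a b. {a,b}\<in>E \<Longrightarrow> g a + g b \<le> p"
        using g0 cV' pp by auto
      define f where "f = g(v := p)"
      have "f ` V = {1..p}"
      proof -
        have "V = insert v V'" using vV V'_def by auto
        then have "f ` V = insert p (g ` V')" unfolding f_def using V'_def by auto
        also have "\<dots> = insert (Suc (card V')) {1..card V'}" using g0(1) pp unfolding bij_betw_def by simp
        also have "\<dots> = {1..p}" using pp atLeastAtMostSuc_conv[of 1 "card V'"] by simp
        finally show ?thesis .
      qed
      then have "bij_betw f V {1..p}" using bij_from_image[OF fin _ \<open>f ` V = {1..p}\<close>] p_def by simp
      moreover have "f a + f b \<le> p + 1" if "{a,b}\<in>E" for a b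
      proof -
        have "a \<noteq> v" "b \<noteq> v" using True that by auto
        then show ?thesis using g(2)[OF that] f_def by simp
      qed
      ultimately show ?thesis using p_def by blast
    next
      case False
      then obtain u where uv: "{v,u} \<in> E" and only: "\<And>e. e \<in> E \<Longrightarrow> v \<in> e \<Longrightarrow> e = {v,u}" using vcase by blast
      have "card {v,u} = 2" using uv SG unfolding simple_graph_def by blast
      then have uv_ne: "u \<noteq> v" by (cases "u = v") auto
      have uV: "u \<in> V" using EV uv by auto
      define V' where "V' = V - {u,v}"
      define E' where "E' = {e\<in>E. u \<notin> e \<and> v \<notin> e}"
      have VV: "V = insert u (insert v V')" using uV vV V'_def by auto
      have finV': "finite V'" using fin V'_def by simp
      have "u \<notin> V'" "v \<notin> V'" using V'_def by auto
      then have "card (insert u (insert v V')) = card V' + 2" using finV' uv_ne by simp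
      then have cV: "p = card V' + 2" using VV p_def by metis
      have "forest V' E'" using sub_forest[OF less.prems, of V' E'] EV V'_def E'_def by blast
      moreover have "card V' < card V" using cV p_def by simp
      ultimately obtain g where g0: "bij_betw g V' {1..card V'}" "\<And>a b. {a,b}\<in>E' \<Longrightarrow> g a + g b \<le> card V' + 1"
        using less.hyps by blast
      have cV2: "p - 2 = card V'" "p - 1 = card V' + 1" using cV by simp_all
      have g: "bij_betw g V' {1..p-2}" "\<And>a b. {a,b}\<in>E' \<Longrightarrow> g a + g b \<le> p - 1"
        using g0 unfolding cV2 by blast+
      define f where "f = (\<lambda>x. g x + 1)(u := 1, v := p)"
      have gim: "g ` V' = {1..p-2}" using bij_betw_imp_surj_on[OF g(1)] .
      have "f ` V = {1..p}"
      proof -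
        have fuv: "f u = 1" "f v = p" using f_def uv_ne by simp_all
        have "f ` V' = (\<lambda>x. g x + 1) ` V'" using \<open>u \<notin> V'\<close> \<open>v \<notin> V'\<close> unfolding f_def
          by (intro image_cong) auto
        then have "f ` V = insert 1 (insert p ((\<lambda>x. g x + 1) ` V'))" using VV fuv by (metis image_insert)
        also have "(\<lambda>x. g x + 1) ` V' = Suc ` (g ` V')" by (simp add: image_image)
        also have "\<dots> = Suc ` {1..card V'}" using gim cV2 by simp
        also have "\<dots> = {2..card V' + 1}" by (simp add: image_Suc_atLeastAtMost)
        also have "insert 1 (insert p {2..card V' + 1}) = {1..p}" using cV by auto
        finally show ?thesis .
      qed
      then have "bij_betw f V {1..p}" using bij_from_image[OF fin _ \<open>f ` V = {1..p}\<close>] p_def by simp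
      moreover have "f a + f b \<le> p + 1" if ab: "{a,b}\<in>E" for a b
      proof -
        have gle: "g x \<le> p - 2" if "x \<in> V'" for x using gim that by auto
        have abV: "a \<in> V" "b \<in> V" using EV ab by auto
        have "card {a,b} = 2" using ab SG unfolding simple_graph_def by blast
        then have ab_ne: "a \<noteq> b" by (cases "a = b") auto
        show ?thesis
        proof (cases "a \<in> {u,v} \<or> b \<in> {u,v}")
          case True
          show ?thesis
          proof (cases "a = v \<or> b = v")
            case True
            then have "{a,b} = {v,u}" using only ab by auto
            then show ?thesis using f_def uv_ne by (auto simp: doubleton_eq_iff)
          next
            case False
            then have "a = u \<and> b \<in> V' \<or> b = u \<and> a \<in> V'" using \<open>a \<in> {u,v} \<or> b \<in> {u,v}\<close> abV ab_ne V'_def by auto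
            then show ?thesis
            proof (elim disjE conjE)
              assume "a = u" "b \<in> V'"
              then show ?thesis using gle[of b] f_def uv_ne cV \<open>v \<notin> V'\<close> by auto
            next
              assume "b = u" "a \<in> V'"
              then show ?thesis using gle[of a] f_def uv_ne cV \<open>v \<notin> V'\<close> by auto
            qed
          qed
        next
          case False
          then have "{a,b} \<in> E'" using ab E'_def by auto
          then have "g a + g b \<le> p - 1" by (rule g(2))
          moreover have "f a = g a + 1" "f b = g b + 1" using False f_def by auto
          ultimately show ?thesis using cV by simp
        qed
      qed
      ultimately show ?thesis using p_def by blast
    qed
  qed
qed


lemma T_finite:
  assumes SG: "simple_graph V E"
  shows "finite {f u + f v | u v. {u, v} \<in> E}"
proof -
  have fin: "finite V" using SG unfolding simple_graph_def by auto
  have "{f u + f v | u v. {u, v} \<in> E} \<subseteq> (\<lambda>(u,v). f u + f v) ` (V \<times> V)"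
  proof
    fix x assume "x \<in> {f u + f v | u v. {u, v} \<in> E}"
    then obtain u v where "x = f u + f v" "{u,v} \<in> E" by blast
    moreover then have "u \<in> V" "v \<in> V" using SG unfolding simple_graph_def by auto
    ultimately show "x \<in> (\<lambda>(u,v). f u + f v) ` (V \<times> V)" by force
  qed
  then show ?thesis using fin by (meson finite_SigmaI finite_imageI finite_subset)
qed

theorem mainTheorem3:
  fixes V :: "'a set" and E :: "'a set set"
  assumes "forest V E" and "E \<noteq> {}"
    and "\<forall>v\<in>V. \<not> isolated_vertex V E v"
  shows "strength V E = card V + 1"
proof -
  have SG: "simple_graph V E" using assms(1) unfolding forest_def by auto
  have fin: "finite V" using SG unfolding simple_graph_def by auto
  define p where "p = card V"
  obtain e0 where e0: "e0 \<in> E" using assms(2) by blast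
  have "e0 \<noteq> {}" "e0 \<subseteq> V" using e0 SG unfolding simple_graph_def by auto
  then have Vne: "V \<noteq> {}" by blast
  have p1: "p \<ge> 1" using Vne fin p_def by (metis card_gt_0_iff Suc_leI One_nat_def)
  obtain x0 where "x0 \<in> e0" using \<open>e0 \<noteq> {}\<close> by blast
  then obtain y0 where "e0 = {x0,y0}" using edge_form[OF SG e0] by blast
  then have Tne: "\<And>f. {f u + f v | u v. {u, v} \<in> E} \<noteq> {}" using e0 by blast
  define S where "S = {strength_of E f | f. numbering V f}"
  obtain f0 where f0: "bij_betw f0 V {1..p}" "\<And>u v. {u,v}\<in>E \<Longrightarrow> f0 u + f0 v \<le> p + 1"
    using forest_num[OF assms(1)] p_def by blast
  have s0: "strength_of E f0 \<le> p + 1"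
    unfolding strength_of_def
  proof (subst Max_le_iff[OF T_finite[OF SG] Tne], intro ballI)
    fix x assume "x \<in> {f0 u + f0 v | u v. {u, v} \<in> E}"
    then show "x \<le> p + 1" using f0(2) by blast
  qed
  have lower: "strength_of E f \<ge> p + 1" and upper: "strength_of E f \<le> 2 * p" if nf: "numbering V f" for f
  proof -
    have bf: "bij_betw f V {1..p}" using nf unfolding numbering_def p_def .
    have rng: "\<And>x. x \<in> V \<Longrightarrow> f x \<in> {1..p}" using bij_betwE[OF bf] by blast
    have "p \<in> f ` V" using bij_betw_imp_surj_on[OF bf] p1 by auto
    then obtain w where w: "w \<in> V" "f w = p" by auto
    then have "\<not> isolated_vertex V E w" using assms(3) by blast
    then obtain e where e: "e \<in> E" "w \<in> e" using w unfolding isolated_vertex_def by blast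
    then obtain y where y: "y \<in> V" "e = {w,y}" using edge_form[OF SG] by blast
    have "f w + f y \<in> {f u + f v | u v. {u, v} \<in> E}" using e y by blast
    then have "f w + f y \<le> strength_of E f" unfolding strength_of_def by (rule Max_ge[OF T_finite[OF SG]])
    moreover have "f y \<ge> 1" using rng[OF y(1)] by simp
    ultimately show "strength_of E f \<ge> p + 1" using w by simp
    have "\<forall>x \<in> {f u + f v | u v. {u, v} \<in> E}. x \<le> 2 * p"
    proof
      fix x assume "x \<in> {f u + f v | u v. {u, v} \<in> E}"
      then obtain u v where "x = f u + f v" "{u,v} \<in> E" by blast
      moreover then have "u \<in> V" "v \<in> V" using SG unfolding simple_graph_def by auto
      moreover have "f u \<le> p" "f v \<le> p" using rng \<open>u \<in> V\<close> \<open>v \<in> V\<close> by auto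
      ultimately show "x \<le> 2 * p" by simp
    qed
    then show "strength_of E f \<le> 2 * p"
      unfolding strength_of_def by (subst Max_le_iff[OF T_finite[OF SG] Tne])
  qed
  have n0: "numbering V f0" using f0(1) unfolding numbering_def p_def .
  have eq0: "strength_of E f0 = p + 1" using s0 lower[OF n0] by simp
  have finS: "finite S"
  proof (rule finite_subset[of S "{..2*p}"])
    show "S \<subseteq> {..2*p}" using upper unfolding S_def by auto
  qed simp
  have "Min S = p + 1"
  proof (rule Min_eqI[OF finS])
    show "\<And>y. y \<in> S \<Longrightarrow> p + 1 \<le> y" using lower unfolding S_def by auto
    show "p + 1 \<in> S" using n0 eq0 unfolding S_def by force
  qed
  then show ?thesis unfolding strength_def S_def[symmetric] p_def .
qed

end
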